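(* For integers $0\le k\le n-1$ and $\lambda\in\mathbb C$, \[ d^k_n(\lambda)=\big(n+(\lambda-1)\big)\,d^k_{n-1}(\lambda)-(\lambda-1)(n-k-1)\,d^k_{n-2}(\lambda), \] where the last term is interpreted as $0$ when $k=n-1$.
   Context: For $\lambda\in\mathbb C$ and integers $0\le k\le n$, define $e^k_n(\lambda)$ by $e^n_n(\lambda)=n!$ and, for $1\le k\le n$, $e^{k-1}_n(\lambda)=e^k_n(\lambda)+(\lambda-1)e^{k-1}_{n-1}(\lambda)$. Put $d^k_n(\lambda)=e^k_n(\lambda)/k!$. (For nonnegative integer $\lambda$, $d^k_n(\lambda)$ counts permutations of $[n]$ whose first $k$ entries are decreasing, where each fixed point among the last $n-k$ positions is given one of $\lambda$ colours.) *)

theory Defs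
  imports Complex_Main
begin

text \<open>Auxiliary: eaux lam n j is e^(n-j)_n(lam), indexed by the gap j = n - k.  Values with j > n are unused (set to 0).\<close>
fun eaux :: "complex \<Rightarrow> nat \<Rightarrow> nat \<Rightarrow> complex" where
  "eaux lam n 0 = of_nat (fact n)"
| "eaux lam n (Suc j) =
     (if Suc j \<le> n then eaux lam n j + (lam - 1) * eaux lam (n - 1) j else 0)"

definition e_num :: "nat \<Rightarrow> nat \<Rightarrow> complex \<Rightarrow> complex" where
  "e_num k n lam = (if k \<le> n then eaux lam n (n - k) else 0)"

definition d_num :: "nat \<Rightarrow> nat \<Rightarrow> complex \<Rightarrow> complex" where
  "d_num k n lam = e_num k n lam / of_nat (fact k)"

lemma e_num_top: "e_num n n lam = of_nat (fact n)"
  by (simp add: e_num_def)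

lemma e_num_rec:
  assumes "1 \<le> k" "k \<le> n"
  shows "e_num (k - 1) n lam = e_num k n lam + (lam - 1) * e_num (k - 1) (n - 1) lam"
proof -
  have "n - (k - 1) = Suc (n - k)" using assms by simp
  moreover have "n - 1 - (k - 1) = n - k" using assms by simp
  moreover have "Suc (n - k) \<le> n" using assms by simp
  ultimately show ?thesis using assms by (auto simp add: e_num_def)
qed

end

theory Submission
  imports Defs
begin

lemma E_step: "j \<le> n \<Longrightarrow> eaux lam (Suc n) (Suc j) = eaux lam (Suc n) j + (lam - 1) * eaux lam n j"
  by simp

lemma alg: fixes a b c d e g h u x y :: complex
  assumes "a = b + u*c" "b = (x+2+u)*d - u*(y+1)*e" "c = (x+1+u)*g - u*(y+1)*h"
    "c = d + u*g" "g = e + u*h"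
  shows "a = (x+2+u)*c - u*(y+2)*g"
proof -
  have d: "d = c - u*g" using assms(4) by simp
  have e: "e = g - u*h" using assms(5) by simp
  have "a = (x+2+u)*(c - u*g) - u*(y+1)*(g - u*h) + u*c"
    using assms(1,2) d e by simp
  also have "\<dots> = (x+2+u)*c - u*(y+2)*g + u*(c - ((x+1+u)*g - u*(y+1)*h))"
    by (simp add: algebra_simps)
  also have "\<dots> = (x+2+u)*c - u*(y+2)*g" using assms(3) by simp
  finally show ?thesis .
qed

lemma E_rec: "j \<le> m \<Longrightarrow> eaux lam (m+2) (j+2) =
   (of_nat (m+2) + (lam - 1)) * eaux lam (m+1) (j+1) - (lam - 1) * of_nat (j+1) * eaux lam m j"
proof (induction j arbitrary: m)
  case 0
  have a: "eaux lam (m+2) 2 = eaux lam (m+2) 1 + (lam-1) * eaux lam (m+1) 1"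
    using E_step[of 1 "m+1" lam] by (simp add: numeral_2_eq_2)
  have b: "eaux lam (m+2) 1 = of_nat (fact (m+2)) + (lam-1) * of_nat (fact (m+1))"
    using E_step[of 0 "m+1" lam] by simp
  have c: "eaux lam (m+1) 1 = of_nat (fact (m+1)) + (lam-1) * of_nat (fact m)"
    using E_step[of 0 "m" lam] by simp
  have f2: "(of_nat (fact (m+2)) :: complex) = of_nat (m+2) * of_nat (m+1) * of_nat (fact m)"
    by (simp add: numeral_2_eq_2 algebra_simps)
  have f1: "(of_nat (fact (m+1)) :: complex) = of_nat (m+1) * of_nat (fact m)"
    by (simp add: algebra_simps)
  show ?case using a b c f1 f2 by (simp add: algebra_simps)
next
  case (Suc j)
  then obtain m' where m: "m = Suc m'" and jm: "j \<le> m'" by (cases m) auto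
  let ?E = "eaux lam" and ?u = "lam - 1"
  have s1: "?E (m+2) (j+3) = ?E (m+2) (j+2) + ?u * ?E (m+1) (j+2)"
    using E_step[of "j+2" "m+1" lam] Suc.prems by (simp add: numeral_3_eq_3 numeral_2_eq_2)
  have i1: "?E (m+2) (j+2) = (of_nat (m+2) + ?u) * ?E (m+1) (j+1) - ?u * of_nat (j+1) * ?E m j"
    using Suc.IH[of m] Suc.prems by simp
  have i2: "?E (m'+2) (j+2) = (of_nat (m'+2) + ?u) * ?E (m'+1) (j+1) - ?u * of_nat (j+1) * ?E m' j"
    using Suc.IH[of m'] jm by simp
  have s2: "?E (m+1) (j+2) = ?E (m+1) (j+1) + ?u * ?E m (j+1)"
    using E_step[of "j+1" m lam] Suc.prems by (simp add: numeral_2_eq_2)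
  have s3: "?E m (j+1) = ?E m j + ?u * ?E m' j"
    using E_step[of j m' lam] jm m by simp
  have e1: "m'+2 = m+1" "m'+1 = m" using m by auto
  have i1': "?E (m+2) (j+2) = (of_nat m+2+?u) * ?E (m+1) (j+1) - ?u * (of_nat j+1) * ?E m j"
    using i1 by (simp del: eaux.simps add: algebra_simps)
  have i2': "?E (m+1) (j+2) = (of_nat m+1+?u) * ?E m (j+1) - ?u * (of_nat j+1) * ?E m' j"
    using i2 e1 m by (simp del: eaux.simps add: algebra_simps)
  have "?E (m+2) (j+3) = (of_nat m+2+?u) * ?E (m+1) (j+2) - ?u*(of_nat j+2) * ?E m (j+1)"
    by (rule alg[OF s1 i1' i2' s2 s3])
  then show ?case by (simp del: eaux.simps add: algebra_simps numeral_3_eq_3 numeral_2_eq_2)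
qed

theorem mainTheorem6:
  fixes k n :: nat and lam :: complex
  assumes "k \<le> n - 1" and "1 \<le> n"
  shows "d_num k n lam =
           (of_nat n + (lam - 1)) * d_num k (n - 1) lam
           - (if k = n - 1 then 0
              else (lam - 1) * of_nat (n - k - 1) * d_num k (n - 2) lam)"
proof (cases "k = n - 1")
  case True
  then obtain n' where n: "n = Suc n'" and k: "k = n'" using assms by (cases n) auto
  have "eaux lam (Suc n') 1 = of_nat (fact (Suc n')) + (lam-1) * of_nat (fact n')"
    using E_step[of 0 n' lam] by simp
  then show ?thesis using True unfolding n k d_num_def e_num_def
    by (simp add: algebra_simps add_divide_distrib)
next
  case False
  define m where "m = n - 2"
  define j where "j = n - k - 2"
  have n: "n = m+2" and k: "n - k = j+2" and jm: "j \<le> m" and nk: "n - 1 - k = j + 1"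
    and n2: "n - 2 - k = j" and n1: "n - 1 = m + 1" and km: "k \<le> m"
    using assms False unfolding m_def j_def by auto
  have "k \<le> n" "k \<le> n - 1" "k \<le> n - 2" using km n by auto
  then have "d_num k n lam = eaux lam (m+2) (j+2) / of_nat (fact k)"
    "d_num k (n-1) lam = eaux lam (m+1) (j+1) / of_nat (fact k)"
    "d_num k (n-2) lam = eaux lam m j / of_nat (fact k)"
    unfolding d_num_def e_num_def using k nk n2 n1 n by auto
  moreover have "of_nat (n - k - 1) = (of_nat (j+1) :: complex)" using k by simp
  ultimately show ?thesis using E_rec[OF jm, of lam] False n
    by (simp add: diff_divide_distrib)
qed

end
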